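(* Let $m\in\mathbb Z_{\ge0}$ and $c\in\mathbb C$ be fixed, and let $D^c_{m+1}=z^2\frac{d}{dz}\left(\frac{1-z}{z}\right)\left(z\frac{d}{dz}+c-1\right)^m\in\mathbb C[z,\frac{d}{dz}]$, a linear ordinary differential operator of order $m+1$. (1) The function $F(z)=Li_{m,c}(z)$ satisfies $D^c_{m+1}F(z)=0$. (2) The singular points of $D^c_{m+1}$ on the Riemann sphere are contained in $\{0,1,\infty\}$ and are all regular singular points; in particular $D^c_{m+1}$ is a Fuchsian operator for all $c\in\mathbb C$. (3) For $c\in\mathbb C\setminus\mathbb Z_{\le0}$, a basis of solutions of $D^c_{m+1}F=0$ on $z\in\mathbb C\setminus((-\infty,0]\cup[1,\infty))$ is $\{Li_{m,c}(z),\ z^{1-c}(\log z)^{m-1},\ z^{1-c}(\log z)^{m-2},\dots,\ z^{1-c}\}$. (4) For $c=-k\in\mathbb Z_{\le0}$, a basis of solutions of $D^c_{m+1}F=0$ on $z\in\mathbb C\setminus((-\infty,0]\cup[1,\infty))$ is $\{Li^*_{m,-k}(z),\ z^{1-c}(\log z)^{m-1},\dots,\ z^{1-c}\}$, where $Li^*_{m,-k}(z)=\sum_{n\ge0,\,n\ne k}\frac{z^{n+1}}{(n-k)^m}+\frac1{m!}z^{k+1}(\log z)^m$.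
   Context: For $c\notin\mathbb Z_{\le0}$, $Li_{m,c}(z)$ denotes the function $\sum_{n=0}^\infty\frac{z^{n+1}}{(n+c)^m}$ for $|z|<1$ (principal branch powers $(n+c)^{-m}$ are ordinary integer powers here), analytically continued to the cut plane $\mathbb C\setminus((-\infty,0]\cup[1,\infty))$. $\log$ is the principal branch and $z^{1-c}=e^{(1-c)\log z}$. *)

theory Defs
  imports "HOL-Analysis.Analysis" "HOL-Computational_Algebra.Polynomial"
begin

definition cut_plane :: "complex set" where
  "cut_plane = - ({z. Im z = 0 \<and> Re z \<le> 0} \<union> {z. Im z = 0 \<and> 1 \<le> Re z})"

definition Li :: "nat \<Rightarrow> complex \<Rightarrow> complex \<Rightarrow> complex" where
  "Li m c = (SOME f. f holomorphic_on cut_plane \<and>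
      (\<forall>z\<in>cut_plane \<inter> ball 0 1. f z = (\<Sum>n. z ^ (n+1) / (of_nat n + c) ^ m)))"

definition Li_star :: "nat \<Rightarrow> nat \<Rightarrow> complex \<Rightarrow> complex" where
  "Li_star m k = (SOME f. f holomorphic_on cut_plane \<and>
      (\<forall>z\<in>cut_plane \<inter> ball 0 1. f z =
          (\<Sum>n. if n = k then 0 else z ^ (n+1) / (of_int (int n - int k)) ^ m)
          + z ^ (k+1) * (Ln z) ^ m / of_nat (fact m)))"

definition theta_c :: "complex \<Rightarrow> (complex \<Rightarrow> complex) \<Rightarrow> complex \<Rightarrow> complex" where
  "theta_c c F = (\<lambda>z. z * deriv F z + (c - 1) * F z)"

definition Dop :: "complex \<Rightarrow> nat \<Rightarrow> (complex \<Rightarrow> complex) \<Rightarrow> complex \<Rightarrow> complex" where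
  "Dop c m F = (\<lambda>z. z ^ 2 * deriv (\<lambda>w. (1 - w) / w * ((theta_c c ^^ m) F) w) z)"

definition ode_apply :: "(nat \<Rightarrow> complex poly) \<Rightarrow> nat \<Rightarrow> (complex \<Rightarrow> complex) \<Rightarrow> complex \<Rightarrow> complex" where
  "ode_apply a n F z = (\<Sum>j\<le>n. poly (a j) z * (deriv ^^ j) F z)"

text \<open>z0 is an ordinary (non-singular) point: all a_j/a_n are holomorphic at z0.\<close>
definition ode_ordinary_at :: "(nat \<Rightarrow> complex poly) \<Rightarrow> nat \<Rightarrow> complex \<Rightarrow> bool" where
  "ode_ordinary_at a n z0 \<longleftrightarrow> (\<forall>j<n. a j = 0 \<or> order z0 (a n) \<le> order z0 (a j))"

text \<open>z0 is ordinary or a regular singular point (Fuchs/Frobenius criterion):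
  a_j/a_n has a pole of order at most n-j at z0.\<close>
definition ode_regular_at :: "(nat \<Rightarrow> complex poly) \<Rightarrow> nat \<Rightarrow> complex \<Rightarrow> bool" where
  "ode_regular_at a n z0 \<longleftrightarrow> (\<forall>j<n. a j = 0 \<or> order z0 (a n) \<le> order z0 (a j) + (n - j))"

text \<open>infinity is ordinary or a regular singular point: a_j/a_n = O(z^-(n-j)) at infinity.\<close>
definition ode_regular_at_infinity :: "(nat \<Rightarrow> complex poly) \<Rightarrow> nat \<Rightarrow> bool" where
  "ode_regular_at_infinity a n \<longleftrightarrow> (\<forall>j<n. a j = 0 \<or> degree (a j) + (n - j) \<le> degree (a n))"

definition is_solution :: "complex \<Rightarrow> nat \<Rightarrow> (complex \<Rightarrow> complex) \<Rightarrow> bool" where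
  "is_solution c m F \<longleftrightarrow> F holomorphic_on cut_plane \<and> (\<forall>z\<in>cut_plane. Dop c m F z = 0)"

definition solution_basis :: "complex \<Rightarrow> nat \<Rightarrow> (nat \<Rightarrow> complex \<Rightarrow> complex) \<Rightarrow> nat \<Rightarrow> bool" where
  "solution_basis c m f N \<longleftrightarrow>
     (\<forall>i\<le>N. is_solution c m (f i)) \<and>
     (\<forall>u::nat \<Rightarrow> complex. (\<forall>z\<in>cut_plane. (\<Sum>i\<le>N. u i * f i z) = 0) \<longrightarrow> (\<forall>i\<le>N. u i = 0)) \<and>
     (\<forall>F. is_solution c m F \<longrightarrow> (\<exists>u::nat \<Rightarrow> complex. \<forall>z\<in>cut_plane. F z = (\<Sum>i\<le>N. u i * f i z)))"

end

theory Submission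
  imports Defs "HOL-Complex_Analysis.Complex_Analysis"
begin


lemma open_cut_plane: "open cut_plane"
proof -
  have "closed ({z. Im z = 0 \<and> Re z \<le> 0} \<union> {z. Im z = 0 \<and> 1 \<le> Re z})"
    by (intro closed_Un closed_Collect_conj closed_Collect_eq closed_Collect_le continuous_intros)
  then show ?thesis unfolding cut_plane_def by (metis open_Compl)
qed

lemma cut_plane_iff: "z \<in> cut_plane \<longleftrightarrow> Im z \<noteq> 0 \<or> (0 < Re z \<and> Re z < 1)"
  unfolding cut_plane_def by auto

lemma cut_plane_nonpos: "z \<in> cut_plane \<Longrightarrow> z \<notin> \<real>\<^sub>\<le>\<^sub>0"
  by (auto simp: cut_plane_iff complex_nonpos_Reals_iff)

lemma cut_plane_ne0: "z \<in> cut_plane \<Longrightarrow> z \<noteq> 0"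
  by (auto simp: cut_plane_iff)

lemma cut_plane_ne1: "z \<in> cut_plane \<Longrightarrow> z \<noteq> 1"
  by (auto simp: cut_plane_iff)

lemma half_in_cut: "(1/2::complex) \<in> cut_plane"
  by (simp add: cut_plane_iff)

lemma segment_cut: 
  assumes "z \<in> cut_plane" shows "closed_segment (1/2) z \<subseteq> cut_plane"
proof
  fix w assume "w \<in> closed_segment (1/2) z"
  then obtain u::real where u: "0 \<le> u" "u \<le> 1" "w = (1 - u) *\<^sub>R (1/2) + u *\<^sub>R z"
    by (auto simp: closed_segment_def)
  have re: "Re w = (1-u)/2 + u * Re z" and im: "Im w = u * Im z" using u(3) by auto
  show "w \<in> cut_plane"
  proof (cases "u = 0")
    case True then show ?thesis using re im by (simp add: cut_plane_iff)
  next
    case False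
    then have "u > 0" using u by auto
    show ?thesis
    proof (cases "Im z = 0")
      case True
      then have "0 < Re z" "Re z < 1" using assms by (auto simp: cut_plane_iff)
      have "u * Re z > 0" using \<open>u>0\<close> \<open>0 < Re z\<close> by simp
      moreover have "u * Re z < u" using \<open>Re z < 1\<close> \<open>u>0\<close> by simp
      ultimately have w0: "0 < Re w" unfolding re using u by (simp add: field_simps)
      have w1: "Re w < 1" unfolding re using u \<open>u * Re z < u\<close> by (simp add: field_simps)
      then show ?thesis using w0 w1 by (simp add: cut_plane_iff)
    next
      case False
      then show ?thesis using im \<open>u>0\<close> by (simp add: cut_plane_iff)
    qed
  qed
qed

lemma starlike_cut: "starlike cut_plane"
  unfolding starlike_def using half_in_cut segment_cut by blast

lemma connected_cut: "connected cut_plane"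
  by (rule starlike_imp_connected[OF starlike_cut])

definition V :: "complex set" where "V = cut_plane \<inter> ball 0 1"

lemma open_V: "open V" unfolding V_def using open_cut_plane by auto

lemma half_in_V: "(1/2::complex) \<in> V" unfolding V_def using half_in_cut by simp

lemma starlike_V: "starlike V"
  unfolding starlike_def V_def
proof (intro bexI ballI)
  fix x assume "x \<in> cut_plane \<inter> ball 0 1"
  then show "closed_segment (1/2) x \<subseteq> cut_plane \<inter> ball 0 1"
    using segment_cut[of x] closed_segment_subset[of "1/2" "ball 0 1" x] convex_ball
    by (auto simp: )
qed (use half_in_cut in auto)

lemma connected_V: "connected V" by (rule starlike_imp_connected[OF starlike_V])



lemma theta_local:
  assumes "open S" "z \<in> S" "\<And>w. w \<in> S \<Longrightarrow> F w = G w"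
  shows "theta_c c F z = theta_c c G z"
proof -
  have "deriv F z = deriv G z"
    by (rule deriv_cong_ev) (use assms in \<open>auto simp: eventually_nhds_in_open intro: eventually_mono[OF eventually_nhds_in_open]\<close>)
  then show ?thesis using assms by (simp add: theta_c_def)
qed

lemma theta_holo:
  assumes "F holomorphic_on S" "open S"
  shows "theta_c c F holomorphic_on S"
  unfolding theta_c_def using assms by (intro holomorphic_intros holomorphic_deriv) auto

lemma thetapow_holo:
  assumes "F holomorphic_on S" "open S"
  shows "(theta_c c ^^ k) F holomorphic_on S"
  by (induction k) (use assms theta_holo in auto)

lemma thetapow_local:
  assumes "open S" "\<And>w. w \<in> S \<Longrightarrow> F w = G w" "z \<in> S"
  shows "(theta_c c ^^ k) F z = (theta_c c ^^ k) G z"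
  using assms(3)
proof (induction k arbitrary: z)
  case 0 then show ?case using assms by simp
next
  case (Suc k)
  have "theta_c c ((theta_c c ^^ k) F) z = theta_c c ((theta_c c ^^ k) G) z"
    by (rule theta_local[OF assms(1) Suc.prems]) (use Suc.IH in auto)
  then show ?case by simp
qed

lemma theta_sum:
  assumes "finite I" "\<And>i. i \<in> I \<Longrightarrow> f i holomorphic_on S" "open S" "z \<in> S"
  shows "theta_c c (\<lambda>z. \<Sum>i\<in>I. u i * f i z) z = (\<Sum>i\<in>I. u i * theta_c c (f i) z)"
proof -
  have d: "((\<lambda>z. \<Sum>i\<in>I. u i * f i z) has_field_derivative (\<Sum>i\<in>I. u i * deriv (f i) z)) (at z)"
    apply (rule DERIV_sum)
    apply (rule DERIV_cmult)
    using assms holomorphic_derivI by blast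
  have "(\<Sum>i\<in>I. u i * (z * deriv (f i) z + (c-1) * f i z))
      = (\<Sum>i\<in>I. z * (u i * deriv (f i) z) + (c-1) * (u i * f i z))"
    by (rule sum.cong) (auto simp: algebra_simps)
  also have "\<dots> = z * (\<Sum>i\<in>I. u i * deriv (f i) z) + (c-1) * (\<Sum>i\<in>I. u i * f i z)"
    unfolding sum.distrib sum_distrib_left ..
  finally show ?thesis unfolding theta_c_def DERIV_imp_deriv[OF d] by simp
qed

lemma thetapow_sum:
  assumes "finite I" "\<And>i. i \<in> I \<Longrightarrow> f i holomorphic_on S" "open S" "z \<in> S"
  shows "(theta_c c ^^ k) (\<lambda>z. \<Sum>i\<in>I. u i * f i z) z = (\<Sum>i\<in>I. u i * (theta_c c ^^ k) (f i) z)"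
  using assms(4)
proof (induction k arbitrary: z)
  case 0 then show ?case by simp
next
  case (Suc k)
  have "(theta_c c ^^ Suc k) (\<lambda>z. \<Sum>i\<in>I. u i * f i z) z
      = theta_c c (\<lambda>z. \<Sum>i\<in>I. u i * (theta_c c ^^ k) (f i) z) z"
    using theta_local[OF assms(3) Suc.prems, of "(theta_c c ^^ k) (\<lambda>z. \<Sum>i\<in>I. u i * f i z)"
       "\<lambda>z. \<Sum>i\<in>I. u i * (theta_c c ^^ k) (f i) z"] Suc.IH
    by simp
  also have "\<dots> = (\<Sum>i\<in>I. u i * (theta_c c ^^ Suc k) (f i) z)"
    using theta_sum[OF assms(1) _ assms(3) Suc.prems] thetapow_holo assms by simp
  finally show ?case .
qed

lemma thetapow_lin2:
  assumes "F holomorphic_on S" "G holomorphic_on S" "open S" "z \<in> S"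
  shows "(theta_c c ^^ k) (\<lambda>z. a * F z + b * G z) z = a * (theta_c c ^^ k) F z + b * (theta_c c ^^ k) G z"
proof -
  have "(theta_c c ^^ k) (\<lambda>z. \<Sum>i\<in>UNIV. (if i then a else b) * (if i then F else G) z) z
     = (\<Sum>i\<in>UNIV. (if i then a else b) * (theta_c c ^^ k) (if i then F else G) z)"
    by (rule thetapow_sum[OF _ _ assms(3,4)]) (use assms in auto)
  then show ?thesis by (simp add: UNIV_bool add.commute)
qed

lemma thetapow_zero: "(theta_c c ^^ k) (\<lambda>z. 0) = (\<lambda>z. 0)"
  by (induction k) (auto simp: theta_c_def)

lemma thetapow_zero_on:
  assumes "open S" "\<And>w. w \<in> S \<Longrightarrow> F w = 0" "z \<in> S"
  shows "(theta_c c ^^ k) F z = 0"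
  using thetapow_local[OF assms(1), of F "\<lambda>_. 0"] assms thetapow_zero by simp

lemma thetapow_add: "(theta_c c ^^ (j + k)) F = (theta_c c ^^ j) ((theta_c c ^^ k) F)"
  by (simp add: funpow_add)

lemma kernel_theta:
  assumes S: "open S" "connected S" "S \<subseteq> cut_plane" and F: "F holomorphic_on S"
    and z0: "\<And>z. z \<in> S \<Longrightarrow> theta_c c F z = 0"
  shows "\<exists>a. \<forall>z\<in>S. F z = a * z powr (1 - c)"
proof -
  define h where "h z = z powr (c - 1) * F z" for z
  have "\<forall>z\<in>S - {}. (h has_field_derivative 0) (at z)"
  proof
    fix z assume z: "z \<in> S - {}"
    then have zc: "z \<in> cut_plane" using S by auto
    have nz: "z \<noteq> 0" using cut_plane_ne0[OF zc] .
    have dF: "(F has_field_derivative deriv F z) (at z)"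
      using F S z holomorphic_derivI by blast
    have "(h has_field_derivative ((c-1) * z powr (c - 1 - 1) * F z + deriv F z * z powr (c-1))) (at z)"
      unfolding h_def by (rule DERIV_mult[OF has_field_derivative_powr[OF cut_plane_nonpos[OF zc]] dF])
    moreover have "(c-1) * z powr (c - 1 - 1) * F z + deriv F z * z powr (c-1)
        = z powr (c - 1 - 1) * theta_c c F z"
    proof -
      have "z powr (c-1) = z powr (c - 1 - 1) * z" using powr_add[of z "c-1-1" 1] by simp
      then show ?thesis unfolding theta_c_def by (simp add: algebra_simps)
    qed
    ultimately show "(h has_field_derivative 0) (at z)" using z0 z by simp
  qed
  moreover have "h holomorphic_on S" unfolding h_def
    using S F by (intro holomorphic_intros) (auto dest: cut_plane_nonpos)
  then have "continuous_on S h" by (rule holomorphic_on_imp_continuous_on)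
  ultimately obtain a where a: "\<And>z. z \<in> S \<Longrightarrow> h z = a"
    using DERIV_zero_connected_constant[OF S(2,1), of "{}" h] by auto
  have "F z = a * z powr (1 - c)" if "z \<in> S" for z
  proof -
    have nz: "z \<noteq> 0" using that S cut_plane_ne0 by auto
    have "z powr (1 - c) * z powr (c - 1) = 1" using powr_add[of z "1-c" "c-1"] nz by simp
    then show ?thesis using a[OF that] unfolding h_def by (metis mult.assoc mult.commute mult_1)
  qed
  then show ?thesis by blast
qed

definition E :: "complex \<Rightarrow> nat \<Rightarrow> complex \<Rightarrow> complex" where
  "E c j z = z powr (1 - c) * Ln z ^ j"

lemma E_holo: "E c j holomorphic_on cut_plane"
  unfolding E_def using cut_plane_nonpos
  by (intro holomorphic_intros) (auto simp: disjoint_iff)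

lemma theta_E:
  assumes zc: "z \<in> cut_plane"
  shows "theta_c c (E c j) z = of_nat j * E c (j - 1) z"
proof -
  have nz: "z \<noteq> 0" using cut_plane_ne0[OF zc] .
  have np: "z \<notin> \<real>\<^sub>\<le>\<^sub>0" using cut_plane_nonpos[OF zc] .
  have "(E c j has_field_derivative ((1-c) * z powr (1 - c - 1) * Ln z ^ j
        + of_nat j * (inverse z * Ln z ^ (j - Suc 0)) * z powr (1-c))) (at z)"
    unfolding E_def by (rule DERIV_mult[OF has_field_derivative_powr[OF np] DERIV_power[OF has_field_derivative_Ln[OF np]]])
  then have d: "deriv (E c j) z = (1-c) * z powr (1 - c - 1) * Ln z ^ j
        + of_nat j * (inverse z * Ln z ^ (j - Suc 0)) * z powr (1-c)"
    by (rule DERIV_imp_deriv)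
  have p: "z * z powr (1 - c - 1) = z powr (1 - c)" using powr_add[of z "1-c-1" 1] by simp
  have "z * deriv (E c j) z = (1-c) * (z * z powr (1 - c - 1)) * Ln z ^ j
        + of_nat j * z powr (1-c) * Ln z ^ (j - 1) * (z * inverse z)"
    unfolding d by (simp add: algebra_simps)
  also have "\<dots> = (1-c) * z powr (1 - c) * Ln z ^ j + of_nat j * z powr (1-c) * Ln z ^ (j - 1)"
    using p nz by simp
  finally show ?thesis unfolding theta_c_def E_def by (simp add: algebra_simps)
qed



lemma reidx:
  fixes m :: nat and h :: "nat \<Rightarrow> 'a::comm_monoid_add"
  shows "(\<Sum>i\<le>m. (if i = 0 then A else h (m - i))) = A + (\<Sum>p<m. h p)"
proof (cases m)
  case 0 then show ?thesis by simp
next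
  case (Suc n)
  have "(\<Sum>i\<le>m. (if i = 0 then A else h (m - i))) = A + (\<Sum>i\<le>n. h (Suc n - Suc i))"
    unfolding Suc sum.atMost_Suc_shift by simp
  also have "(\<Sum>i\<le>n. h (Suc n - Suc i)) = (\<Sum>i<Suc n. h (Suc n - Suc i))"
    by (simp add: lessThan_Suc_atMost)
  also have "\<dots> = (\<Sum>p<Suc n. h p)" by (rule sum.nat_diff_reindex)
  finally show ?thesis using Suc by simp
qed

lemma preimage_theta:
  assumes g: "g holomorphic_on cut_plane"
  shows "\<exists>F. F holomorphic_on cut_plane \<and> (\<forall>z\<in>cut_plane. theta_c c F z = g z)"
proof -
  define k where "k z = z powr (c - 2) * g z" for z
  have kh: "k holomorphic_on cut_plane" unfolding k_def
    using g by (intro holomorphic_intros) (auto dest: cut_plane_nonpos)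
  obtain H where H: "\<And>x. x \<in> cut_plane \<Longrightarrow> (H has_field_derivative k x) (at x)"
    using holomorphic_starlike_primitive[OF holomorphic_on_imp_continuous_on[OF kh] starlike_cut open_cut_plane, of "{}"]
      kh open_cut_plane holomorphic_on_imp_differentiable_at by blast
  have Hh: "H holomorphic_on cut_plane"
    using H open_cut_plane holomorphic_on_open field_differentiable_def by blast
  define F where "F z = z powr (1 - c) * H z" for z
  have Fh: "F holomorphic_on cut_plane" unfolding F_def
    using Hh by (intro holomorphic_intros) (auto dest: cut_plane_nonpos)
  have "theta_c c F z = g z" if z: "z \<in> cut_plane" for z
  proof -
    have nz: "z \<noteq> 0" using cut_plane_ne0[OF z] .
    have "(F has_field_derivative ((1-c) * z powr (1 - c - 1) * H z + k z * z powr (1 - c))) (at z)"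
      unfolding F_def by (rule DERIV_mult[OF has_field_derivative_powr[OF cut_plane_nonpos[OF z]] H[OF z]])
    then have d: "deriv F z = (1-c) * z powr (1 - c - 1) * H z + k z * z powr (1 - c)"
      by (rule DERIV_imp_deriv)
    have p1: "z * z powr (1 - c - 1) = z powr (1 - c)" using powr_add[of z "1-c-1" 1] by simp
    have p2: "z * (z powr (c - 2) * z powr (1 - c)) = 1"
      using powr_add[of z "c-2" "1-c"] powr_add[of z 1 "-1"] nz by simp
    have "z * deriv F z = (1-c) * (z * z powr (1 - c - 1)) * H z + g z * (z * (z powr (c - 2) * z powr (1 - c)))"
      unfolding d k_def by (simp add: algebra_simps)
    also have "\<dots> = (1-c) * z powr (1 - c) * H z + g z" unfolding p1 p2 by simp
    finally show ?thesis unfolding theta_c_def F_def by (simp add: algebra_simps)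
  qed
  then show ?thesis using Fh by blast
qed

lemma kernel_thetapow:
  "F holomorphic_on cut_plane \<Longrightarrow> (\<forall>z\<in>cut_plane. (theta_c c ^^ k) F z = 0) \<Longrightarrow>
   \<exists>u. \<forall>z\<in>cut_plane. F z = (\<Sum>i<k. u i * E c i z)"
proof (induction k arbitrary: F)
  case 0 then show ?case by simp
next
  case (Suc k)
  have tF: "theta_c c F holomorphic_on cut_plane" using theta_holo Suc.prems open_cut_plane by blast
  have "\<forall>z\<in>cut_plane. (theta_c c ^^ k) (theta_c c F) z = 0"
    using Suc.prems(2) by (simp add: funpow_Suc_right del: funpow.simps)
  then obtain u where u: "\<And>z. z \<in> cut_plane \<Longrightarrow> theta_c c F z = (\<Sum>i<k. u i * E c i z)"
    using Suc.IH tF by blast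
  define P where "P z = (\<Sum>i<k. (u i / of_nat (Suc i)) * E c (Suc i) z)" for z
  have Ph: "P holomorphic_on cut_plane" unfolding P_def using E_holo by (intro holomorphic_intros) auto
  have tP: "theta_c c P z = (\<Sum>i<k. u i * E c i z)" if z: "z \<in> cut_plane" for z
  proof -
    have "theta_c c P z = (\<Sum>i<k. (u i / of_nat (Suc i)) * theta_c c (E c (Suc i)) z)"
      unfolding P_def by (rule theta_sum[OF _ _ open_cut_plane z]) (use E_holo in auto)
    also have "\<dots> = (\<Sum>i<k. u i * E c i z)"
      by (rule sum.cong) (auto simp: theta_E[OF z] simp del: of_nat_Suc)
    finally show ?thesis .
  qed
  define D where "D z = 1 * F z + (-1) * P z" for z
  have Dh: "D holomorphic_on cut_plane" unfolding D_def using Suc.prems Ph by (intro holomorphic_intros) auto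
  have "theta_c c D z = 0" if z: "z \<in> cut_plane" for z
    using thetapow_lin2[OF Suc.prems(1) Ph open_cut_plane z, where c=c and k="Suc 0" and a=1 and b="-1"] u[OF z] tP[OF z]
    unfolding D_def by simp
  then obtain a where a: "\<And>z. z \<in> cut_plane \<Longrightarrow> D z = a * z powr (1 - c)"
    using kernel_theta[OF open_cut_plane connected_cut order_refl Dh] by blast
  define v where "v i = (if i = 0 then a else u (i - 1) / of_nat i)" for i
  have "F z = (\<Sum>i<Suc k. v i * E c i z)" if z: "z \<in> cut_plane" for z
  proof -
    have "F z = a * E c 0 z + P z" using a[OF z] unfolding D_def E_def by (simp add: algebra_simps)
    also have "\<dots> = (\<Sum>i<Suc k. v i * E c i z)"
      unfolding sum.lessThan_Suc_shift P_def v_def by simp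
    finally show ?thesis .
  qed
  then show ?case by blast
qed

lemma thetapow_E_zero:
  "i < k \<Longrightarrow> z \<in> cut_plane \<Longrightarrow> (theta_c c ^^ k) (E c i) z = 0"
proof (induction i arbitrary: k z)
  case 0
  then obtain k' where k: "k = Suc k'" by (cases k) auto
  have "(theta_c c ^^ k) (E c 0) z = (theta_c c ^^ k') (theta_c c (E c 0)) z"
    unfolding k by (simp add: funpow_Suc_right del: funpow.simps)
  also have "\<dots> = 0"
    by (rule thetapow_zero_on[OF open_cut_plane _ 0(2)]) (simp add: theta_E)
  finally show ?case .
next
  case (Suc i)
  then obtain k' where k: "k = Suc k'" "i < k'" by (cases k) auto
  have "(theta_c c ^^ k) (E c (Suc i)) z = (theta_c c ^^ k') (theta_c c (E c (Suc i))) z"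
    unfolding k by (simp add: funpow_Suc_right del: funpow.simps)
  also have "\<dots> = (theta_c c ^^ k') (\<lambda>z. of_nat (Suc i) * E c i z + 0 * E c i z) z"
    by (rule thetapow_local[OF open_cut_plane _ Suc.prems(2)]) (simp add: theta_E del: of_nat_Suc)
  also have "\<dots> = of_nat (Suc i) * (theta_c c ^^ k') (E c i) z + 0 * (theta_c c ^^ k') (E c i) z"
    by (rule thetapow_lin2[OF E_holo E_holo open_cut_plane Suc.prems(2)])
  also have "\<dots> = 0" using Suc.IH[OF k(2) Suc.prems(2)] by simp
  finally show ?case .
qed



lemma Dop_const:
  assumes F: "F holomorphic_on cut_plane"
    and t: "\<And>z. z \<in> cut_plane \<Longrightarrow> (theta_c c ^^ m) F z = K * (z / (1 - z))"
    and z: "z \<in> cut_plane"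
  shows "Dop c m F z = 0"
proof -
  have "deriv (\<lambda>w. (1 - w) / w * (theta_c c ^^ m) F w) z = deriv (\<lambda>w. K) z"
  proof (rule deriv_cong_ev)
    show "\<forall>\<^sub>F x in nhds z. (1 - x) / x * (theta_c c ^^ m) F x = K"
      using eventually_nhds_in_open[OF open_cut_plane z]
    proof (rule eventually_mono)
      fix x assume x: "x \<in> cut_plane"
      have "x \<noteq> 0" "1 - x \<noteq> 0" using cut_plane_ne0[OF x] cut_plane_ne1[OF x] by auto
      then show "(1 - x) / x * (theta_c c ^^ m) F x = K" using t[OF x] by (simp add: field_simps)
    qed
  qed simp
  then show ?thesis unfolding Dop_def by simp
qed

lemma infinite_neg_roots:
  "infinite (range (\<lambda>n::nat. - of_nat n - (1::complex)))"
  by (rule range_inj_infinite) (auto simp: inj_on_def)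

lemma basis_generic:
  assumes f0: "f0 holomorphic_on cut_plane"
    and t: "\<And>z. z \<in> cut_plane \<Longrightarrow> (theta_c c ^^ m) f0 z = z / (1 - z)"
  shows "solution_basis c m (\<lambda>i z. if i = 0 then f0 z else z powr (1 - c) * Ln z ^ (m - i)) m"
proof -
  define fb where "fb i = (\<lambda>z. if i = 0 then f0 z else z powr (1 - c) * Ln z ^ (m - i))" for i
  have fb0: "fb 0 = f0" unfolding fb_def by simp
  have fbE: "fb i = E c (m - i)" if "i \<noteq> 0" for i
    using that unfolding fb_def E_def by auto
  have fbh: "fb i holomorphic_on cut_plane" for i
    by (cases "i = 0") (auto simp: fb0 fbE f0 E_holo)
  have tfb: "(theta_c c ^^ m) (fb i) z = (if i = 0 then z / (1 - z) else 0)"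
    if "i \<le> m" "z \<in> cut_plane" for i z
    using that by (cases "i = 0") (auto simp: fb0 fbE t thetapow_E_zero)
  have sol: "\<forall>i\<le>m. is_solution c m (fb i)"
  proof (intro allI impI)
    fix i assume i: "i \<le> m"
    have "Dop c m (fb i) z = 0" if "z \<in> cut_plane" for z
      by (rule Dop_const[OF fbh, where K = "if i = 0 then 1 else 0"]) (use tfb i that in auto)
    then show "is_solution c m (fb i)" unfolding is_solution_def using fbh by blast
  qed
  have resum: "(\<Sum>i\<le>m. u i * fb i z) = u 0 * f0 z + (\<Sum>p<m. u (m - p) * E c p z)" for u z
  proof -
    have "(\<Sum>i\<le>m. u i * fb i z) = (\<Sum>i\<le>m. (if i = 0 then u 0 * f0 z else (\<lambda>p. u (m - p) * E c p z) (m - i)))"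
      by (rule sum.cong) (auto simp: fb0 fbE)
    then show ?thesis using reidx[where m=m and A="u 0 * f0 z" and h="\<lambda>p. u (m - p) * E c p z"] by simp
  qed
  have indep: "\<forall>i\<le>m. u i = 0" if u: "\<forall>z\<in>cut_plane. (\<Sum>i\<le>m. u i * fb i z) = 0" for u
  proof -
    have "(theta_c c ^^ m) (\<lambda>z. \<Sum>i\<le>m. u i * fb i z) (1/2) = 0"
      by (rule thetapow_zero_on[OF open_cut_plane _ half_in_cut]) (use u in auto)
    moreover have "(theta_c c ^^ m) (\<lambda>z. \<Sum>i\<le>m. u i * fb i z) (1/2) = (\<Sum>i\<le>m. u i * (theta_c c ^^ m) (fb i) (1/2))"
      by (rule thetapow_sum[OF _ _ open_cut_plane half_in_cut]) (auto simp: fbh)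
    moreover have "(\<Sum>i\<le>m. u i * (theta_c c ^^ m) (fb i) (1/2)) = u 0"
      using half_in_cut by (simp add: tfb if_distrib cong: if_cong)
    ultimately have u0: "u 0 = 0" by simp
    define cf where "cf p = u (m - p)" for p
    have "{w. (\<Sum>p\<le>m. cf p * w ^ p) = 0} \<supseteq> range (\<lambda>n::nat. - of_nat n - (1::complex))"
    proof clarify
      fix n :: nat
      define w :: complex where "w = - of_nat n - 1"
      define z where "z = exp w"
      have wr: "w = of_real (- real n - 1)" unfolding w_def by simp
      have zr: "z = of_real (exp (- real n - 1))" unfolding z_def wr by (simp only: exp_of_real)
      have "exp (- real n - 1) < 1" by simp
      then have zc: "z \<in> cut_plane" unfolding zr cut_plane_iff by simp
      have Lz: "Ln z = w" unfolding z_def by (rule Ln_exp) (auto simp: wr)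
      have "0 = u 0 * f0 z + (\<Sum>p<m. u (m - p) * E c p z)" using u zc resum by simp
      also have "\<dots> = z powr (1 - c) * (\<Sum>p<m. cf p * w ^ p)"
        using u0 by (simp add: E_def Lz cf_def sum_distrib_left algebra_simps)
      finally have "(\<Sum>p<m. cf p * w ^ p) = 0" using cut_plane_ne0[OF zc] by simp
      then show "(\<Sum>p\<le>m. cf p * (- of_nat n - 1) ^ p) = 0"
        using u0 by (simp add: lessThan_Suc_atMost[symmetric] cf_def w_def)
    qed
    then have "infinite {w. (\<Sum>p\<le>m. cf p * w ^ p) = 0}"
      using infinite_neg_roots infinite_super by blast
    then have "\<forall>p\<le>m. cf p = 0" using polyfun_finite_roots[of cf m] by blast
    then show ?thesis unfolding cf_def by (metis diff_diff_cancel diff_le_self)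
  qed
  have span: "\<exists>u. \<forall>z\<in>cut_plane. F z = (\<Sum>i\<le>m. u i * fb i z)" if F: "is_solution c m F" for F
  proof -
    have Fh: "F holomorphic_on cut_plane" and D0: "\<And>z. z \<in> cut_plane \<Longrightarrow> Dop c m F z = 0"
      using F unfolding is_solution_def by auto
    define h where "h w = (1 - w) / w * (theta_c c ^^ m) F w" for w
    have hh: "h holomorphic_on cut_plane" unfolding h_def
      using thetapow_holo[OF Fh open_cut_plane] cut_plane_ne0 by (intro holomorphic_intros) auto
    have "\<forall>x\<in>cut_plane - {}. (h has_field_derivative 0) (at x)"
    proof
      fix x assume x: "x \<in> cut_plane - {}"
      then have "x ^ 2 * deriv h x = 0" using D0[of x] unfolding Dop_def h_def by auto
      then have "deriv h x = 0" using cut_plane_ne0[of x] x by auto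
      moreover have "(h has_field_derivative deriv h x) (at x)"
        using hh x open_cut_plane holomorphic_derivI by blast
      ultimately show "(h has_field_derivative 0) (at x)" by simp
    qed
    then obtain K where K: "\<And>x. x \<in> cut_plane \<Longrightarrow> h x = K"
      using DERIV_zero_connected_constant[OF connected_cut open_cut_plane, of "{}" h]
        holomorphic_on_imp_continuous_on[OF hh] by auto
    have tF: "(theta_c c ^^ m) F z = K * (z / (1 - z))" if z: "z \<in> cut_plane" for z
    proof -
      have "z \<noteq> 0" "1 - z \<noteq> 0" using cut_plane_ne0[OF z] cut_plane_ne1[OF z] by auto
      then show ?thesis using K[OF z] unfolding h_def by (simp add: field_simps)
    qed
    define G where "G z = 1 * F z + (-K) * f0 z" for z
    have Gh: "G holomorphic_on cut_plane" unfolding G_def using Fh f0 by (intro holomorphic_intros)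
    have "\<forall>z\<in>cut_plane. (theta_c c ^^ m) G z = 0"
    proof
      fix z assume z: "z \<in> cut_plane"
      show "(theta_c c ^^ m) G z = 0"
        unfolding G_def thetapow_lin2[OF Fh f0 open_cut_plane z] tF[OF z] t[OF z] by simp
    qed
    then obtain v where v: "\<And>z. z \<in> cut_plane \<Longrightarrow> G z = (\<Sum>p<m. v p * E c p z)"
      using kernel_thetapow[OF Gh] by blast
    define u where "u i = (if i = 0 then K else v (m - i))" for i
    have "F z = (\<Sum>i\<le>m. u i * fb i z)" if z: "z \<in> cut_plane" for z
    proof -
      have "(\<Sum>i\<le>m. u i * fb i z) = K * f0 z + (\<Sum>p<m. u (m - p) * E c p z)"
        using resum[of u z] by (simp add: u_def)
      also have "(\<Sum>p<m. u (m - p) * E c p z) = (\<Sum>p<m. v p * E c p z)"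
        by (rule sum.cong) (auto simp: u_def)
      also have "\<dots> = G z" using v[OF z] by simp
      finally show ?thesis unfolding G_def by simp
    qed
    then show ?thesis by blast
  qed
  show ?thesis unfolding solution_basis_def fb_def[symmetric]
    using sol indep span by blast
qed



lemma bounded_from_eventually:
  fixes a :: "nat \<Rightarrow> complex"
  assumes "\<And>n. n \<ge> N \<Longrightarrow> norm (a n) \<le> 1"
  shows "\<exists>B. \<forall>n. norm (a n) \<le> B"
proof -
  have "norm (a n) \<le> 1 + (\<Sum>i<N. norm (a i))" for n
  proof (cases "n < N")
    case True
    then have "norm (a n) \<le> (\<Sum>i<N. norm (a i))"
      by (intro member_le_sum) auto
    then show ?thesis by simp
  next
    case False
    then have "norm (a n) \<le> 1" using assms by simp
    moreover have "0 \<le> (\<Sum>i<N. norm (a i))" by (intro sum_nonneg) auto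
    ultimately show ?thesis by simp
  qed
  then show ?thesis by blast
qed

lemma series_props:
  fixes a :: "nat \<Rightarrow> complex"
  assumes B: "\<And>n. norm (a n) \<le> B" and z: "norm z < 1"
  shows "summable (\<lambda>n. a n * z ^ (n+1))"
    and "summable (\<lambda>n. of_nat (Suc n) * a n * z ^ n)"
    and "((\<lambda>z. \<Sum>n. a n * z ^ (n+1)) has_field_derivative (\<Sum>n. of_nat (Suc n) * a n * z ^ n)) (at z)"
proof -
  define b where "b n = (if n = 0 then 0 else a (n - 1))" for n
  have sb: "summable (\<lambda>n. b n * w ^ n)" if w: "norm w < 1" for w
  proof (rule summable_comparison_test[where g = "\<lambda>n. B * norm w ^ n"])
    show "\<exists>N. \<forall>n\<ge>N. norm (b n * w ^ n) \<le> B * norm w ^ n"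
      unfolding b_def using B by (auto simp: norm_mult norm_power intro!: mult_right_mono)
    show "summable (\<lambda>n. B * norm w ^ n)" using w by (intro summable_mult summable_geometric) auto
  qed
  have eq: "(\<Sum>n. b n * w ^ n) = (\<Sum>n. a n * w ^ (n+1))" if w: "norm w < 1" for w
  proof -
    have "(\<lambda>n. b (Suc n) * w ^ Suc n) sums (suminf (\<lambda>n. b n * w ^ n) - b 0 * w ^ 0)"
      using sums_Suc_iff[of "\<lambda>n. b n * w ^ n"] summable_sums[OF sb[OF w]] by simp
    then show ?thesis unfolding b_def by (simp add: sums_iff)
  qed
  have sa: "summable (\<lambda>n. a n * w ^ (n+1))" if w: "norm w < 1" for w
  proof -
    have "summable (\<lambda>n. b (Suc n) * w ^ Suc n)"
      using summable_ignore_initial_segment[OF sb[OF w], of 1] by simp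
    then show ?thesis unfolding b_def by simp
  qed
  show "summable (\<lambda>n. a n * z ^ (n+1))" using sa z .
  have dd: "diffs b n = of_nat (Suc n) * a n" for n unfolding diffs_def b_def by simp
  show "summable (\<lambda>n. of_nat (Suc n) * a n * z ^ n)"
    using termdiff_converges[OF z sb] unfolding dd .
  have "((\<lambda>z. \<Sum>n. b n * z ^ n) has_field_derivative (\<Sum>n. diffs b n * z ^ n)) (at z)"
    by (rule termdiffs_strong'[OF sb z])
  then have "((\<lambda>z. \<Sum>n. a n * z ^ (n+1)) has_field_derivative (\<Sum>n. diffs b n * z ^ n)) (at z)"
    by (rule has_field_derivative_transform_within_open[where S = "ball 0 1"]) (use z eq in auto)
  then show "((\<lambda>z. \<Sum>n. a n * z ^ (n+1)) has_field_derivative (\<Sum>n. of_nat (Suc n) * a n * z ^ n)) (at z)"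
    unfolding dd .
qed

lemma series_holo:
  fixes a :: "nat \<Rightarrow> complex"
  assumes B: "\<And>n. norm (a n) \<le> B"
  shows "(\<lambda>z. \<Sum>n. a n * z ^ (n+1)) holomorphic_on ball 0 1"
  unfolding holomorphic_on_open[OF open_ball] field_differentiable_def
proof (intro ballI exI)
  fix z :: complex assume "z \<in> ball 0 1"
  then have "norm z < 1" by simp
  from series_props(3)[of a B z, OF B this]
  show "((\<lambda>z. \<Sum>n. a n * z ^ (n+1)) has_field_derivative (\<Sum>n. of_nat (Suc n) * a n * z ^ n)) (at z)" .
qed

lemma series_theta:
  fixes a :: "nat \<Rightarrow> complex"
  assumes B: "\<And>n. norm (a n) \<le> B" and z: "norm z < 1"
  shows "theta_c c (\<lambda>z. \<Sum>n. a n * z ^ (n+1)) z = (\<Sum>n. ((of_nat n + c) * a n) * z ^ (n+1))"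
proof -
  note s = series_props[OF B z]
  have "theta_c c (\<lambda>z. \<Sum>n. a n * z ^ (n+1)) z
      = z * (\<Sum>n. of_nat (Suc n) * a n * z ^ n) + (c - 1) * (\<Sum>n. a n * z ^ (n+1))"
    unfolding theta_c_def DERIV_imp_deriv[OF s(3)] ..
  also have "\<dots> = (\<Sum>n. z * (of_nat (Suc n) * a n * z ^ n)) + (\<Sum>n. (c - 1) * (a n * z ^ (n+1)))"
    using suminf_mult[OF s(1)] suminf_mult[OF s(2)] by simp
  also have "\<dots> = (\<Sum>n. z * (of_nat (Suc n) * a n * z ^ n) + (c - 1) * (a n * z ^ (n+1)))"
    by (rule suminf_add) (use s summable_mult in auto)
  also have "\<dots> = (\<Sum>n. ((of_nat n + c) * a n) * z ^ (n+1))"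
    by (rule suminf_cong) (simp add: algebra_simps)
  finally show ?thesis .
qed

lemma V_sub: "V \<subseteq> cut_plane" "V \<subseteq> ball 0 1" unfolding V_def by auto

lemma extend:
  assumes Ph: "\<And>j. P j holomorphic_on V"
    and Pt: "\<And>j z. z \<in> V \<Longrightarrow> theta_c c (P (Suc j)) z = P j z"
    and g: "g holomorphic_on cut_plane" and g0: "\<And>z. z \<in> V \<Longrightarrow> P 0 z = g z"
  shows "\<exists>f. f holomorphic_on cut_plane \<and> (\<forall>z\<in>V. f z = P m z)"
proof (induction m)
  case 0 then show ?case using g g0 by auto
next
  case (Suc m)
  then obtain fm where fm: "fm holomorphic_on cut_plane" "\<And>z. z \<in> V \<Longrightarrow> fm z = P m z" by blast
  obtain F where F: "F holomorphic_on cut_plane" "\<And>z. z \<in> cut_plane \<Longrightarrow> theta_c c F z = fm z"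
    using preimage_theta[OF fm(1), of c] by blast
  define D where "D z = 1 * F z + (-1) * P (Suc m) z" for z
  have FV: "F holomorphic_on V" using F(1) V_sub holomorphic_on_subset by blast
  have Dh: "D holomorphic_on V" unfolding D_def using FV Ph by (intro holomorphic_intros)
  have "theta_c c D z = 0" if z: "z \<in> V" for z
    using thetapow_lin2[OF FV Ph open_V z, where c=c and k="Suc 0" and a=1 and b="-1"]
      F(2)[of z] fm(2)[OF z] Pt[OF z] V_sub z unfolding D_def by auto
  then obtain a where a: "\<And>z. z \<in> V \<Longrightarrow> D z = a * z powr (1 - c)"
    using kernel_theta[OF open_V connected_V V_sub(1) Dh] by blast
  define f where "f z = F z - a * z powr (1 - c)" for z
  have "f holomorphic_on cut_plane" unfolding f_def
    using F(1) by (intro holomorphic_intros) (auto dest: cut_plane_nonpos)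
  moreover have "\<forall>z\<in>V. f z = P (Suc m) z" using a unfolding f_def D_def by (auto simp: algebra_simps)
  ultimately show ?case by blast
qed

lemma thetapow_from_V:
  assumes Ph: "\<And>j. P j holomorphic_on V"
    and Pt: "\<And>j z. z \<in> V \<Longrightarrow> theta_c c (P (Suc j)) z = P j z"
    and g: "g holomorphic_on cut_plane" and g0: "\<And>z. z \<in> V \<Longrightarrow> P 0 z = g z"
    and f: "f holomorphic_on cut_plane" and fV: "\<And>z. z \<in> V \<Longrightarrow> f z = P m z"
    and z: "z \<in> cut_plane"
  shows "(theta_c c ^^ m) f z = g z"
proof -
  have "j \<le> m \<Longrightarrow> w \<in> V \<Longrightarrow> (theta_c c ^^ j) f w = P (m - j) w" for j w
  proof (induction j arbitrary: w)
    case 0 then show ?case using fV by simp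
  next
    case (Suc j)
    have "(theta_c c ^^ Suc j) f w = theta_c c ((theta_c c ^^ j) f) w" by simp
    also have "\<dots> = theta_c c (P (Suc (m - Suc j))) w"
      by (rule theta_local[OF open_V Suc.prems(2)]) (use Suc in \<open>auto simp: Suc_diff_Suc\<close>)
    also have "\<dots> = P (m - Suc j) w" using Pt[OF Suc.prems(2)] .
    finally show ?case .
  qed
  then have onV: "\<And>w. w \<in> V \<Longrightarrow> (theta_c c ^^ m) f w = g w" using g0 by simp
  show ?thesis
    by (rule analytic_continuation_open[where s = V and s' = cut_plane])
       (use open_V half_in_V open_cut_plane connected_cut V_sub thetapow_holo[OF f open_cut_plane] g onV z in auto)
qed



lemma geom_z:
  assumes "norm (z::complex) < 1" shows "(\<lambda>n. z ^ (n+1)) sums (z / (1 - z))"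
  using sums_mult[OF geometric_sums[OF assms], of z] by (simp add: field_simps)

lemma g_holo: "(\<lambda>z. z / (1 - z)) holomorphic_on cut_plane"
  using cut_plane_ne1 by (intro holomorphic_intros) auto

lemma ne_nonpos: "c \<notin> \<int>\<^sub>\<le>\<^sub>0 \<Longrightarrow> of_nat n + c \<noteq> 0"
proof
  assume "c \<notin> \<int>\<^sub>\<le>\<^sub>0" "of_nat n + c = 0"
  then have "c = - of_nat n" by (simp add: eq_neg_iff_add_eq_0 add.commute)
  then show False using \<open>c \<notin> \<int>\<^sub>\<le>\<^sub>0\<close> by simp
qed

definition PL :: "complex \<Rightarrow> nat \<Rightarrow> complex \<Rightarrow> complex" where
  "PL c j z = (\<Sum>n. z ^ (n+1) / (of_nat n + c) ^ j)"

definition aL :: "complex \<Rightarrow> nat \<Rightarrow> nat \<Rightarrow> complex" where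
  "aL c j n = inverse (of_nat n + c) ^ j"

lemma PL_eq: "PL c j = (\<lambda>z. \<Sum>n. aL c j n * z ^ (n+1))"
  unfolding PL_def aL_def by (simp add: divide_inverse power_inverse mult.commute)

lemma aL_bounded: "\<exists>B. \<forall>n. norm (aL c j n) \<le> B"
proof (rule bounded_from_eventually)
  fix n assume n: "n \<ge> nat \<lceil>norm c\<rceil> + 1"
  have "real n \<ge> norm c + 1" using n by linarith
  moreover have "norm (of_nat n + c) \<ge> real n - norm c"
    using norm_diff_ineq[of "of_nat n :: complex" c] by simp
  ultimately have "norm (of_nat n + c) \<ge> 1" by linarith
  then have "norm (inverse (of_nat n + c)) \<le> 1"
    by (simp add: norm_inverse inverse_le_1_iff)
  then show "norm (aL c j n) \<le> 1" unfolding aL_def norm_power by (simp add: power_le_one)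
qed

lemma PL_props:
  assumes c: "c \<notin> \<int>\<^sub>\<le>\<^sub>0"
  shows "PL c j holomorphic_on V"
    and "z \<in> V \<Longrightarrow> theta_c c (PL c (Suc j)) z = PL c j z"
    and "z \<in> V \<Longrightarrow> PL c 0 z = z / (1 - z)"
proof -
  obtain B where B: "\<And>n. norm (aL c j n) \<le> B" using aL_bounded by blast
  show "PL c j holomorphic_on V" unfolding PL_eq
    by (rule holomorphic_on_subset[OF series_holo[OF B] V_sub(2)])
next
  assume z: "z \<in> V"
  then have nz: "norm z < 1" using V_sub by auto
  obtain B where B: "\<And>n. norm (aL c (Suc j) n) \<le> B" using aL_bounded by blast
  show "theta_c c (PL c (Suc j)) z = PL c j z"
    unfolding PL_eq series_theta[OF B nz]
  proof (intro suminf_cong)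
    fix n
    have "of_nat n + c \<noteq> 0" using ne_nonpos[OF c] .
    then show "(of_nat n + c) * aL c (Suc j) n * z ^ (n + 1) = aL c j n * z ^ (n + 1)"
      unfolding aL_def by (simp add: mult.assoc[symmetric])
  qed
next
  assume z: "z \<in> V"
  then have nz: "norm z < 1" using V_sub by auto
  show "PL c 0 z = z / (1 - z)" unfolding PL_def using geom_z[OF nz] by (simp add: sums_iff)
qed

lemma Li_prop:
  assumes c: "c \<notin> \<int>\<^sub>\<le>\<^sub>0"
  shows "Li m c holomorphic_on cut_plane" "\<And>z. z \<in> V \<Longrightarrow> Li m c z = PL c m z"
proof -
  have ex: "\<exists>f. f holomorphic_on cut_plane \<and> (\<forall>z\<in>V. f z = PL c m z)"
    by (rule extend[where c = c]) (use PL_props[OF c] g_holo in auto)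
  have ex2: "\<exists>f. f holomorphic_on cut_plane \<and>
      (\<forall>z\<in>cut_plane \<inter> ball 0 1. f z = (\<Sum>n. z ^ (n+1) / (of_nat n + c) ^ m))"
    using ex unfolding V_def PL_def .
  have "Li m c holomorphic_on cut_plane \<and>
      (\<forall>z\<in>cut_plane \<inter> ball 0 1. Li m c z = (\<Sum>n. z ^ (n+1) / (of_nat n + c) ^ m))"
    unfolding Li_def by (rule someI_ex[OF ex2])
  then have "Li m c holomorphic_on cut_plane \<and> (\<forall>z\<in>V. Li m c z = PL c m z)"
    unfolding V_def PL_def .
  then show "Li m c holomorphic_on cut_plane" "\<And>z. z \<in> V \<Longrightarrow> Li m c z = PL c m z" by auto
qed

lemma Li_theta:
  assumes c: "c \<notin> \<int>\<^sub>\<le>\<^sub>0" and z: "z \<in> cut_plane"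
  shows "(theta_c c ^^ m) (Li m c) z = z / (1 - z)"
  by (rule thetapow_from_V[where P = "PL c"]) (use PL_props[OF c] g_holo Li_prop[OF c] z in auto)



definition aS :: "nat \<Rightarrow> nat \<Rightarrow> nat \<Rightarrow> complex" where
  "aS k j n = (if n = k then 0 else inverse (of_int (int n - int k)) ^ j)"

definition SS :: "nat \<Rightarrow> nat \<Rightarrow> complex \<Rightarrow> complex" where
  "SS k j z = (\<Sum>n. if n = k then 0 else z ^ (n+1) / (of_int (int n - int k)) ^ j)"

definition LL :: "nat \<Rightarrow> nat \<Rightarrow> complex \<Rightarrow> complex" where
  "LL k j z = z ^ (k+1) * (Ln z) ^ j / of_nat (fact j)"

definition PS :: "nat \<Rightarrow> nat \<Rightarrow> complex \<Rightarrow> complex" where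
  "PS k j z = SS k j z + LL k j z"

lemma SS_eq: "SS k j = (\<lambda>z. \<Sum>n. aS k j n * z ^ (n+1))"
  unfolding SS_def aS_def
  by (intro ext suminf_cong) (simp add: divide_inverse power_inverse mult.commute)

lemma aS_bounded: "norm (aS k j n) \<le> 1"
proof (cases "n = k")
  case False
  then have "int n - int k \<noteq> 0" by simp
  then have "norm (of_int (int n - int k) :: complex) \<ge> 1"
    by (metis norm_of_int of_int_1_le_iff of_int_abs zero_less_abs_iff int_one_le_iff_zero_less)
  then have "norm (inverse (of_int (int n - int k) :: complex)) \<le> 1"
    by (simp add: norm_inverse inverse_le_1_iff)
  then have "norm (inverse (of_int (int n - int k) :: complex) ^ j) \<le> 1"
    unfolding norm_power by (rule power_le_one[OF norm_ge_zero])
  then show ?thesis using False unfolding aS_def by simp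
qed (simp add: aS_def)

lemma theta_add:
  assumes "F holomorphic_on S" "G holomorphic_on S" "open S" "z \<in> S"
  shows "theta_c c (\<lambda>z. F z + G z) z = theta_c c F z + theta_c c G z"
  using thetapow_lin2[OF assms, where c=c and k="Suc 0" and a=1 and b=1] by simp

lemma theta_scale:
  assumes "F holomorphic_on S" "open S" "z \<in> S"
  shows "theta_c c (\<lambda>z. a * F z) z = a * theta_c c F z"
  using thetapow_lin2[OF assms(1) assms, where c=c and k="Suc 0" and a=a and b=0] by simp

lemma LL_E:
  assumes z: "z \<in> cut_plane"
  shows "LL k j z = inverse (of_nat (fact j)) * E (- of_nat k) j z"
proof -
  have "z powr (1 - (- of_nat k)) = z powr (of_nat (Suc k))" by simp
  also have "\<dots> = z ^ (Suc k)" using cut_plane_ne0[OF z] by (rule powr_nat'[OF disjI1])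
  finally show ?thesis unfolding LL_def E_def by (simp add: field_simps)
qed

lemma LL_holo: "LL k j holomorphic_on cut_plane"
  unfolding LL_def using cut_plane_nonpos by (intro holomorphic_intros) (auto simp: disjoint_iff)

lemma LL_theta:
  assumes z: "z \<in> cut_plane"
  shows "theta_c (- of_nat k) (LL k (Suc j)) z = LL k j z"
proof -
  have "theta_c (- of_nat k) (LL k (Suc j)) z
      = theta_c (- of_nat k) (\<lambda>z. inverse (of_nat (fact (Suc j))) * E (- of_nat k) (Suc j) z) z"
    by (rule theta_local[OF open_cut_plane z]) (simp add: LL_E)
  also have "\<dots> = inverse (of_nat (fact (Suc j))) * (of_nat (Suc j) * E (- of_nat k) j z)"
    unfolding theta_scale[OF E_holo open_cut_plane z] theta_E[OF z] by simp
  also have "\<dots> = inverse (of_nat (fact j)) * E (- of_nat k) j z"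
  proof -
    have a: "of_nat (Suc j) \<noteq> (0::complex)" "of_nat (fact j) \<noteq> (0::complex)" by (simp_all del: of_nat_Suc)
    have "(of_nat (fact (Suc j)) :: complex) = of_nat (Suc j) * of_nat (fact j)"
      by (simp only: fact_Suc of_nat_mult of_nat_id)
    then show ?thesis using a by (simp del: of_nat_Suc of_nat_fact fact_Suc)
  qed
  finally show ?thesis using LL_E[OF z] by simp
qed

lemma PS_props:
  shows "PS k j holomorphic_on V"
    and "z \<in> V \<Longrightarrow> theta_c (- of_nat k) (PS k (Suc j)) z = PS k j z"
    and "z \<in> V \<Longrightarrow> PS k 0 z = z / (1 - z)"
proof -
  have SSh: "SS k j holomorphic_on V" for j unfolding SS_eq
    by (rule holomorphic_on_subset[OF series_holo[OF aS_bounded] V_sub(2)])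
  have LLh: "LL k j holomorphic_on V" for j using LL_holo V_sub holomorphic_on_subset by blast
  show "PS k j holomorphic_on V" unfolding PS_def[abs_def] using SSh LLh by (intro holomorphic_intros)
next
  assume z: "z \<in> V"
  then have nz: "norm z < 1" and zc: "z \<in> cut_plane" using V_sub by auto
  have SSh: "SS k j holomorphic_on V" for j unfolding SS_eq
    by (rule holomorphic_on_subset[OF series_holo[OF aS_bounded] V_sub(2)])
  have LLh: "LL k j holomorphic_on V" for j using LL_holo V_sub holomorphic_on_subset by blast
  have tS: "theta_c (- of_nat k) (SS k (Suc j)) z = SS k j z"
    unfolding SS_eq series_theta[OF aS_bounded nz]
  proof (intro suminf_cong)
    fix n
    show "(of_nat n + - of_nat k) * aS k (Suc j) n * z ^ (n + 1) = aS k j n * z ^ (n + 1)"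
    proof (cases "n = k")
      case False
      then have ne: "(of_int (int n - int k) :: complex) \<noteq> 0" by simp
      have "(of_nat n + - of_nat k :: complex) = of_int (int n - int k)" by simp
      then show ?thesis using ne False unfolding aS_def by (simp add: mult.assoc[symmetric])
    qed (simp add: aS_def)
  qed
  have "theta_c (- of_nat k) (PS k (Suc j)) z
      = theta_c (- of_nat k) (SS k (Suc j)) z + theta_c (- of_nat k) (LL k (Suc j)) z"
    unfolding PS_def[abs_def] by (rule theta_add[OF SSh LLh open_V z])
  then show "theta_c (- of_nat k) (PS k (Suc j)) z = PS k j z"
    unfolding tS LL_theta[OF zc] PS_def .
next
  assume z: "z \<in> V"
  then have nz: "norm z < 1" using V_sub by auto
  have s1: "(\<lambda>n. if n = k then z ^ (n+1) else 0) sums z ^ (k+1)"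
    using sums_single[of k "\<lambda>n. z ^ (n+1)"] .
  have "(\<lambda>n. z ^ (n+1) - (if n = k then z ^ (n+1) else 0)) sums (z / (1 - z) - z ^ (k+1))"
    by (rule sums_diff[OF geom_z[OF nz] s1])
  moreover have "(\<lambda>n. z ^ (n+1) - (if n = k then z ^ (n+1) else 0))
     = (\<lambda>n. if n = k then 0 else z ^ (n+1) / (of_int (int n - int k)) ^ 0)" by auto
  ultimately have "SS k 0 z = z / (1 - z) - z ^ (k+1)" unfolding SS_def by (simp add: sums_iff)
  then show "PS k 0 z = z / (1 - z)" unfolding PS_def LL_def by simp
qed

lemma Li_star_prop:
  shows "Li_star m k holomorphic_on cut_plane" "\<And>z. z \<in> V \<Longrightarrow> Li_star m k z = PS k m z"
proof -
  have ex: "\<exists>f. f holomorphic_on cut_plane \<and> (\<forall>z\<in>V. f z = PS k m z)"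
    by (rule extend[where c = "- of_nat k"]) (use PS_props g_holo in auto)
  have ex2: "\<exists>f. f holomorphic_on cut_plane \<and>
      (\<forall>z\<in>cut_plane \<inter> ball 0 1. f z =
          (\<Sum>n. if n = k then 0 else z ^ (n+1) / (of_int (int n - int k)) ^ m)
          + z ^ (k+1) * (Ln z) ^ m / of_nat (fact m))"
    using ex unfolding V_def PS_def SS_def LL_def .
  have "Li_star m k holomorphic_on cut_plane \<and>
      (\<forall>z\<in>cut_plane \<inter> ball 0 1. Li_star m k z =
          (\<Sum>n. if n = k then 0 else z ^ (n+1) / (of_int (int n - int k)) ^ m)
          + z ^ (k+1) * (Ln z) ^ m / of_nat (fact m))"
    unfolding Li_star_def by (rule someI_ex[OF ex2])
  then have "Li_star m k holomorphic_on cut_plane \<and> (\<forall>z\<in>V. Li_star m k z = PS k m z)"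
    unfolding V_def PS_def SS_def LL_def .
  then show "Li_star m k holomorphic_on cut_plane" "\<And>z. z \<in> V \<Longrightarrow> Li_star m k z = PS k m z" by auto
qed

lemma Li_star_theta:
  assumes z: "z \<in> cut_plane"
  shows "(theta_c (- of_nat k) ^^ m) (Li_star m k) z = z / (1 - z)"
  by (rule thetapow_from_V[where P = "PS k"]) (use PS_props g_holo Li_star_prop z in auto)



fun beta :: "complex \<Rightarrow> nat \<Rightarrow> nat \<Rightarrow> complex" where
  "beta c 0 j = (if j = 0 then 1 else 0)"
| "beta c (Suc k) j = (of_nat j + c - 1) * beta c k j + (if j = 0 then 0 else beta c k (j - 1))"

lemma beta_gt: "k < j \<Longrightarrow> beta c k j = 0"
  by (induction k arbitrary: j) auto

lemma beta_diag: "beta c k k = 1"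
  by (induction k) (auto simp: beta_gt)

lemma theta_T:
  assumes F: "F holomorphic_on S" and S: "open S" and z: "z \<in> S"
  shows "theta_c c (\<lambda>w. w ^ j * (deriv ^^ j) F w) z
       = (of_nat j + c - 1) * (z ^ j * (deriv ^^ j) F z) + z ^ Suc j * (deriv ^^ Suc j) F z"
proof -
  have Dh: "(deriv ^^ j) F holomorphic_on S" using holomorphic_higher_deriv[OF F S] .
  have dD: "((deriv ^^ j) F has_field_derivative (deriv ^^ Suc j) F z) (at z)"
    using holomorphic_derivI[OF Dh S z] by simp
  have "((\<lambda>w. w ^ j * (deriv ^^ j) F w) has_field_derivative
        (of_nat j * (1 * z ^ (j - Suc 0)) * (deriv ^^ j) F z + (deriv ^^ Suc j) F z * z ^ j)) (at z)"
    by (rule DERIV_mult[OF DERIV_power[OF DERIV_ident] dD])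
  then have d: "deriv (\<lambda>w. w ^ j * (deriv ^^ j) F w) z
      = of_nat j * (1 * z ^ (j - Suc 0)) * (deriv ^^ j) F z + (deriv ^^ Suc j) F z * z ^ j"
    by (rule DERIV_imp_deriv)
  have zz: "z * (of_nat j * z ^ (j - Suc 0)) = of_nat j * z ^ j" by (cases j) auto
  have "z * deriv (\<lambda>w. w ^ j * (deriv ^^ j) F w) z
      = (z * (of_nat j * z ^ (j - Suc 0))) * (deriv ^^ j) F z + z ^ Suc j * (deriv ^^ Suc j) F z"
    unfolding d by (simp add: algebra_simps)
  also have "\<dots> = of_nat j * z ^ j * (deriv ^^ j) F z + z ^ Suc j * (deriv ^^ Suc j) F z"
    unfolding zz ..
  finally show ?thesis unfolding theta_c_def by (simp add: algebra_simps)
qed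

lemma thetapow_expand:
  assumes F: "F holomorphic_on S" and S: "open S"
  shows "z \<in> S \<Longrightarrow> (theta_c c ^^ k) F z = (\<Sum>j\<le>k. beta c k j * (z ^ j * (deriv ^^ j) F z))"
proof (induction k arbitrary: z)
  case 0 then show ?case by simp
next
  case (Suc k)
  define T where "T j w = w ^ j * (deriv ^^ j) F w" for j w
  have Th: "T j holomorphic_on S" for j unfolding T_def
    using F S by (intro holomorphic_intros)
  have "(theta_c c ^^ Suc k) F z = theta_c c (\<lambda>w. \<Sum>j\<le>k. beta c k j * T j w) z"
    using theta_local[OF S Suc.prems, of "(theta_c c ^^ k) F" "\<lambda>w. \<Sum>j\<le>k. beta c k j * T j w" c] Suc.IH
    unfolding T_def by simp
  also have "\<dots> = (\<Sum>j\<le>k. beta c k j * theta_c c (T j) z)"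
    by (rule theta_sum[OF _ _ S Suc.prems]) (use Th in auto)
  also have "\<dots> = (\<Sum>j\<le>k. beta c k j * ((of_nat j + c - 1) * T j z + T (Suc j) z))"
    unfolding T_def using theta_T[OF F S Suc.prems] by simp
  also have "\<dots> = (\<Sum>j\<le>k. (of_nat j + c - 1) * beta c k j * T j z + beta c k j * T (Suc j) z)"
    by (rule sum.cong) (simp_all add: algebra_simps del: beta.simps)
  also have "\<dots> = (\<Sum>j\<le>k. (of_nat j + c - 1) * beta c k j * T j z) + (\<Sum>j\<le>k. beta c k j * T (Suc j) z)"
    by (rule sum.distrib)
  also have "(\<Sum>j\<le>k. (of_nat j + c - 1) * beta c k j * T j z)
      = (\<Sum>j\<le>Suc k. (of_nat j + c - 1) * beta c k j * T j z)"
    by (simp add: beta_gt)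
  also have "(\<Sum>j\<le>k. beta c k j * T (Suc j) z)
      = (\<Sum>j\<le>Suc k. (if j = 0 then 0 else beta c k (j - 1)) * T j z)"
    unfolding sum.atMost_Suc_shift by simp
  also have "(\<Sum>j\<le>Suc k. (of_nat j + c - 1) * beta c k j * T j z)
      + (\<Sum>j\<le>Suc k. (if j = 0 then 0 else beta c k (j - 1)) * T j z)
      = (\<Sum>j\<le>Suc k. beta c (Suc k) j * T j z)"
    by (simp add: sum.distrib[symmetric] algebra_simps)
  finally show ?case unfolding T_def .
qed

definition acoef :: "complex \<Rightarrow> nat \<Rightarrow> nat \<Rightarrow> complex poly" where
  "acoef c m j = [:0,1:] ^ j * [: beta c (Suc m) j - c * beta c m j, - beta c (Suc m) j + (c - 1) * beta c m j :]"

lemma Dop_expand: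
  assumes F: "F holomorphic_on S" and S: "open S" and z: "z \<in> S - {0}"
  shows "Dop c m F z = ode_apply (acoef c m) (m+1) F z"
proof -
  define G where "G = (theta_c c ^^ m) F"
  have Gh: "G holomorphic_on S" unfolding G_def by (rule thetapow_holo[OF F S])
  have zS: "z \<in> S" and nz: "z \<noteq> 0" using z by auto
  have dG: "(G has_field_derivative deriv G z) (at z)" using holomorphic_derivI[OF Gh S zS] .
  have "((\<lambda>w. (1 - w) / w * G w) has_field_derivative
        (((0 - 1) * z - (1 - z) * 1) / (z * z)) * G z + deriv G z * ((1 - z) / z)) (at z)"
    by (rule DERIV_mult[OF DERIV_divide[OF DERIV_diff[OF DERIV_const DERIV_ident] DERIV_ident nz] dG])
  then have d: "deriv (\<lambda>w. (1 - w) / w * G w) z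
      = (((0 - 1) * z - (1 - z) * 1) / (z * z)) * G z + deriv G z * ((1 - z) / z)"
    by (rule DERIV_imp_deriv)
  have "Dop c m F z = z ^ 2 * ((((0 - 1) * z - (1 - z) * 1) / (z * z)) * G z + deriv G z * ((1 - z) / z))"
    unfolding Dop_def G_def[symmetric] d ..
  also have "\<dots> = - G z + (1 - z) * (z * deriv G z)"
    using nz by (simp add: field_simps power2_eq_square)
  also have "z * deriv G z = theta_c c G z - (c - 1) * G z" unfolding theta_c_def by simp
  also have "theta_c c G z = (theta_c c ^^ Suc m) F z" unfolding G_def by simp
  finally have D1: "Dop c m F z = (1 - z) * (theta_c c ^^ Suc m) F z - (c - (c - 1) * z) * G z"
    by (simp add: algebra_simps)
  have e1: "(theta_c c ^^ Suc m) F z = (\<Sum>j\<le>m+1. beta c (Suc m) j * (z ^ j * (deriv ^^ j) F z))"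
    using thetapow_expand[OF F S zS, where c=c and k="Suc m"] by simp
  have e0: "G z = (\<Sum>j\<le>m+1. beta c m j * (z ^ j * (deriv ^^ j) F z))"
    using thetapow_expand[OF F S zS, where c=c and k=m] unfolding G_def by (simp add: beta_gt)
  have pa: "poly (acoef c m j) z = z ^ j * ((1 - z) * beta c (Suc m) j - (c - (c - 1) * z) * beta c m j)" for j
    unfolding acoef_def by (simp add: algebra_simps)
  show ?thesis unfolding D1 e1 e0 ode_apply_def pa sum_distrib_left sum_subtractf[symmetric]
    by (rule sum.cong) (simp_all add: algebra_simps del: beta.simps)
qed

lemma acoef_top: "acoef c m (m+1) = [:0,1:] ^ (m+1) * [:1, -1:]"
  unfolding acoef_def using beta_diag[of c "Suc m"] beta_gt[of m "m+1" c] by simp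

lemma order_X_pow: "order 0 ([:0,1:] ^ n :: complex poly) = n"
  using order_power_n_n[of "0::complex" n] by simp

lemma poly_part2:
  "acoef c m (m+1) \<noteq> 0 \<and>
   (\<forall>z0. z0 \<notin> {0, 1} \<longrightarrow> ode_ordinary_at (acoef c m) (m+1) z0) \<and>
   ode_regular_at (acoef c m) (m+1) 0 \<and> ode_regular_at (acoef c m) (m+1) 1 \<and>
   ode_regular_at_infinity (acoef c m) (m+1)"
proof -
  define n where "n = m + 1"
  define q where "q j = [: beta c (Suc m) j - c * beta c m j, - beta c (Suc m) j + (c - 1) * beta c m j :]" for j
  have aq: "acoef c m j = [:0,1:] ^ j * q j" for j unfolding acoef_def q_def ..
  have X0: "([:0,1:] :: complex poly) \<noteq> 0" by simp
  have L0: "([:1,-1:] :: complex poly) \<noteq> 0" by simp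
  have top: "acoef c m n = [:0,1:] ^ n * [:1, -1:]" unfolding n_def by (rule acoef_top)
  have Xn: "([:0,1:] :: complex poly) ^ n \<noteq> 0" using X0 by simp
  have nz: "acoef c m n \<noteq> 0" unfolding top using Xn L0 by (simp only: mult_eq_0_iff) blast
  have ord: "ode_ordinary_at (acoef c m) n z0" if "z0 \<notin> {0, 1}" for z0
  proof -
    have "poly (acoef c m n) z0 \<noteq> 0" unfolding top using that by simp
    then have "order z0 (acoef c m n) = 0" by (rule order_0I)
    then show ?thesis unfolding ode_ordinary_at_def by simp
  qed
  have r0: "ode_regular_at (acoef c m) n 0"
    unfolding ode_regular_at_def
  proof (intro allI impI)
    fix j assume j: "j < n"
    show "acoef c m j = 0 \<or> order 0 (acoef c m n) \<le> order 0 (acoef c m j) + (n - j)"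
    proof (cases "acoef c m j = 0")
      case False
      then have "q j \<noteq> 0" unfolding aq by auto
      then have "order 0 (acoef c m j) = j + order 0 (q j)"
        using False unfolding aq by (simp add: order_mult order_X_pow)
      moreover have "order 0 (acoef c m n) = n"
      proof -
        have "order 0 ([:1,-1:] :: complex poly) = 0" by (rule order_0I) simp
        then show ?thesis unfolding top order_mult[OF nz[unfolded top]] order_X_pow by simp
      qed
      ultimately show ?thesis using j by simp
    qed simp
  qed
  have r1: "ode_regular_at (acoef c m) n 1"
    unfolding ode_regular_at_def
  proof (intro allI impI)
    fix j assume j: "j < n"
    have "order 1 (acoef c m n) \<le> 1"
    proof -
      have "order 1 ([:0,1:] ^ n :: complex poly) = 0" by (rule order_0I) simp
      moreover have "order 1 ([:1,-1:] :: complex poly) \<le> 1"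
        using order_degree[OF L0, of 1] by simp
      ultimately show ?thesis unfolding top order_mult[OF nz[unfolded top]] by simp
    qed
    then show "acoef c m j = 0 \<or> order 1 (acoef c m n) \<le> order 1 (acoef c m j) + (n - j)"
      using j by linarith
  qed
  have rinf: "ode_regular_at_infinity (acoef c m) n"
    unfolding ode_regular_at_infinity_def
  proof (intro allI impI disjI2)
    fix j assume j: "j < n"
    have dX: "degree ([:0,1:] ^ j :: complex poly) = j" for j
      using degree_power_eq[OF X0, of j] by simp
    have "degree (acoef c m j) \<le> j + 1"
    proof -
      have dq: "degree (q j) \<le> 1" unfolding q_def by auto
      show ?thesis unfolding aq using degree_mult_le[of "[:0,1:] ^ j" "q j"] dX[of j] dq by linarith
    qed
    moreover have "degree (acoef c m n) = n + 1"
      unfolding top degree_mult_eq[OF Xn L0] dX by simp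
    ultimately show "degree (acoef c m j) + (n - j) \<le> degree (acoef c m n)" using j by simp
  qed
  show ?thesis using nz ord r0 r1 rinf unfolding n_def by blast
qed


theorem theorem8p1:
  fixes m :: nat and c :: complex
  shows
   "(c \<notin> \<int>\<^sub>\<le>\<^sub>0 \<longrightarrow> (\<forall>z\<in>cut_plane. Dop c m (Li m c) z = 0))
    \<and> (\<exists>a :: nat \<Rightarrow> complex poly. a (m+1) \<noteq> 0 \<and>
         (\<forall>S F. open S \<longrightarrow> F holomorphic_on S \<longrightarrow>
             (\<forall>z\<in>S - {0}. Dop c m F z = ode_apply a (m+1) F z)) \<and>
         (\<forall>z0. z0 \<notin> {0, 1} \<longrightarrow> ode_ordinary_at a (m+1) z0) \<and>
         ode_regular_at a (m+1) 0 \<and> ode_regular_at a (m+1) 1 \<and>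
         ode_regular_at_infinity a (m+1))
    \<and> (c \<notin> \<int>\<^sub>\<le>\<^sub>0 \<longrightarrow>
         solution_basis c m
           (\<lambda>i z. if i = 0 then Li m c z else z powr (1 - c) * (Ln z) ^ (m - i)) m)
    \<and> (\<forall>k::nat. c = - of_nat k \<longrightarrow>
         solution_basis c m
           (\<lambda>i z. if i = 0 then Li_star m k z else z powr (1 - c) * (Ln z) ^ (m - i)) m)"
proof (intro conjI)
  show "c \<notin> \<int>\<^sub>\<le>\<^sub>0 \<longrightarrow> (\<forall>z\<in>cut_plane. Dop c m (Li m c) z = 0)"
  proof (intro impI ballI)
    fix z assume c: "c \<notin> \<int>\<^sub>\<le>\<^sub>0" and z: "z \<in> cut_plane"
    show "Dop c m (Li m c) z = 0"
      by (rule Dop_const[OF Li_prop(1)[OF c], where K = 1]) (use Li_theta[OF c] z in auto)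
  qed
  show "\<exists>a :: nat \<Rightarrow> complex poly. a (m+1) \<noteq> 0 \<and>
         (\<forall>S F. open S \<longrightarrow> F holomorphic_on S \<longrightarrow>
             (\<forall>z\<in>S - {0}. Dop c m F z = ode_apply a (m+1) F z)) \<and>
         (\<forall>z0. z0 \<notin> {0, 1} \<longrightarrow> ode_ordinary_at a (m+1) z0) \<and>
         ode_regular_at a (m+1) 0 \<and> ode_regular_at a (m+1) 1 \<and>
         ode_regular_at_infinity a (m+1)"
    using poly_part2[of c m] Dop_expand[where c = c and m = m] by blast
  show "c \<notin> \<int>\<^sub>\<le>\<^sub>0 \<longrightarrow>
         solution_basis c m
           (\<lambda>i z. if i = 0 then Li m c z else z powr (1 - c) * (Ln z) ^ (m - i)) m"
    using basis_generic[OF Li_prop(1) Li_theta] by blast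
  show "\<forall>k::nat. c = - of_nat k \<longrightarrow>
         solution_basis c m
           (\<lambda>i z. if i = 0 then Li_star m k z else z powr (1 - c) * (Ln z) ^ (m - i)) m"
  proof (intro allI impI)
    fix k :: nat assume c: "c = - of_nat k"
    show "solution_basis c m
           (\<lambda>i z. if i = 0 then Li_star m k z else z powr (1 - c) * (Ln z) ^ (m - i)) m"
      unfolding c by (rule basis_generic[OF Li_star_prop(1) Li_star_theta])
  qed
qed

end
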